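(* Let $\mathcal{T}\in\mathbb{T}$ and let $\widehat{\mathcal{T}}\in\mathbb{T}$ be a refinement of $\mathcal{T}$. Then $$\sum_{T\in\widehat{\mathcal{T}}\setminus\mathcal{T}}\eta_{\widehat{\mathcal{T}}}(T)^2\le q\sum_{T\in\mathcal{T}\setminus\widehat{\mathcal{T}}}\eta_\mathcal{T}(T)^2+C\|u_{\widehat{\mathcal{T}}}-u_\mathcal{T}\|_{L^2(0,t_{\rm end};\mathcal{V})}^2$$ and $$\Big|\Big(\sum_{T\in\widehat{\mathcal{T}}\cap\mathcal{T}}\eta_{\widehat{\mathcal{T}}}(T)^2\Big)^{1/2}-\Big(\sum_{T\in\mathcal{T}\cap\widehat{\mathcal{T}}}\eta_\mathcal{T}(T)^2\Big)^{1/2}\Big|\le C\|u_{\widehat{\mathcal{T}}}-u_\mathcal{T}\|_{L^2(0,t_{\rm end};\mathcal{V})},$$ with constants $1/4<q<1$ and $C>0$ depending only on $\mathbb{A}$.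
   Context: $\mathcal{V}$ finite-dimensional Hilbert space, $\mathcal{V}\subseteq\mathcal{H}\subseteq\mathcal{V}^\star$ a Gelfand triple, $\mathbb{A}:\mathcal{V}\to\mathcal{V}^\star$ bounded, linear, time-independent, coercive. $t_{\rm end}>0$, $u_0\in\mathcal{H}$; $\mathcal{T}_0$ a partition of $[0,t_{\rm end}]$ into compact intervals, $\mathbb{T}$ the partitions obtained by iterated bisection of intervals (each bisected interval is split into two halves of equal length). $f\in L^2(0,t_{\rm end};\mathcal{V}^\star)$ affine in $t$ on each interval of $\mathcal{T}_0$. For $\mathcal{T}\in\mathbb{T}$, $u_\mathcal{T}$ is the continuous, $\mathcal{T}$-piecewise affine-in-time Crank–Nicolson solution: $u_\mathcal{T}(0)=u_0$ and on each $T_i=[t_i,t_{i+1}]\in\mathcal{T}$, $\frac{u_\mathcal{T}(t_{i+1})-u_\mathcal{T}(t_i)}{|T_i|}+\mathbb{A}u_\mathcal{T}(\frac{t_i+t_{i+1}}2)=f|_{T_i}(\frac{t_i+t_{i+1}}2)$. Estimator: $\eta_\mathcal{T}(T):=|T|\,\|\partial_tf-\partial_t\mathbb{A}u_\mathcal{T}\|_{L^2(T;\mathcal{V}^\star)}$. *)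

theory Defs
  imports "HOL-Analysis.Analysis"
begin

text \<open>Time intervals are represented as pairs (a,b) standing for the compact
interval {a..b}.\<close>

definition is_partition :: "(real \<times> real) set \<Rightarrow> real \<Rightarrow> real \<Rightarrow> bool" where
  "is_partition P lo hi \<longleftrightarrow>
     finite P \<and> (\<forall>T\<in>P. fst T < snd T) \<and>
     (\<Union>T\<in>P. {fst T..snd T}) = {lo..hi} \<and>
     (\<forall>T\<in>P. \<forall>T'\<in>P. T \<noteq> T' \<longrightarrow> {fst T<..<snd T} \<inter> {fst T'<..<snd T'} = {})"

inductive_set bisections :: "(real \<times> real) set \<Rightarrow> (real \<times> real) set set"
  for P0 :: "(real \<times> real) set" where
  base: "P0 \<in> bisections P0"
| bisect: "P \<in> bisections P0 \<Longrightarrow> (a, b) \<in> P \<Longrightarrow>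
     (P - {(a, b)}) \<union> {(a, (a + b) / 2), ((a + b) / 2, b)} \<in> bisections P0"

definition refines :: "(real \<times> real) set \<Rightarrow> (real \<times> real) set \<Rightarrow> bool" where
  "refines Q P \<longleftrightarrow> (\<forall>T'\<in>Q. \<exists>T\<in>P. fst T \<le> fst T' \<and> snd T' \<le> snd T)"

definition piecewise_affine_on :: "(real \<Rightarrow> 'w::real_vector) \<Rightarrow> (real \<times> real) set \<Rightarrow> bool" where
  "piecewise_affine_on f P \<longleftrightarrow>
     (\<forall>T\<in>P. \<exists>c d. \<forall>t\<in>{fst T<..<snd T}. f t = c + t *\<^sub>R d)"

text \<open>The H inner product (Gelfand triple V \<subseteq> H \<subseteq> V*, V finite-dimensional, so H = V
as sets with another inner product m); h \<in> H acts on V via v \<mapsto> m h v.\<close>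
definition H_inner :: "('v::euclidean_space \<Rightarrow> 'v \<Rightarrow> real) \<Rightarrow> bool" where
  "H_inner m \<longleftrightarrow> bilinear m \<and> (\<forall>x y. m x y = m y x) \<and> (\<forall>x. x \<noteq> 0 \<longrightarrow> m x x > 0)"

definition cn_solution ::
  "('v::euclidean_space \<Rightarrow> 'v \<Rightarrow> real) \<Rightarrow> ('v \<Rightarrow>\<^sub>L ('v \<Rightarrow>\<^sub>L real)) \<Rightarrow> (real \<Rightarrow> ('v \<Rightarrow>\<^sub>L real))
    \<Rightarrow> 'v \<Rightarrow> (real \<times> real) set \<Rightarrow> (real \<Rightarrow> 'v) \<Rightarrow> bool" where
  "cn_solution m A f u0 P u \<longleftrightarrow>
     u 0 = u0 \<and>
     (\<forall>T\<in>P. \<forall>t\<in>{fst T..snd T}.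
        u t = u (fst T) + ((t - fst T) / (snd T - fst T)) *\<^sub>R (u (snd T) - u (fst T))) \<and>
     (\<forall>T\<in>P. \<forall>v. m ((1 / (snd T - fst T)) *\<^sub>R (u (snd T) - u (fst T))) v
                 + blinfun_apply (blinfun_apply A (u ((fst T + snd T) / 2))) v
               = blinfun_apply (f ((fst T + snd T) / 2)) v)"

definition est ::
  "('v::euclidean_space \<Rightarrow>\<^sub>L ('v \<Rightarrow>\<^sub>L real)) \<Rightarrow> (real \<Rightarrow> ('v \<Rightarrow>\<^sub>L real)) \<Rightarrow> (real \<Rightarrow> 'v)
     \<Rightarrow> real \<times> real \<Rightarrow> real" where
  "est A f u T = (snd T - fst T) *
     sqrt (integral {fst T..snd T}
       (\<lambda>t. (norm (vector_derivative (\<lambda>s. f s - blinfun_apply A (u s)) (at t)))\<^sup>2))"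

definition L2V_norm :: "real \<Rightarrow> (real \<Rightarrow> 'v::euclidean_space) \<Rightarrow> real" where
  "L2V_norm tend w = sqrt (integral {0..tend} (\<lambda>t. (norm (w t))\<^sup>2))"

end

theory Submission
  imports Defs
begin


lemma partition_bisect:
  assumes P: "is_partition P lo hi" and ab: "(a,b) \<in> P"
  shows "is_partition ((P - {(a, b)}) \<union> {(a, (a + b) / 2), ((a + b) / 2, b)}) lo hi"
proof -
  have ab': "a < b" using P ab unfolding is_partition_def by fastforce
  have dis: "\<And>T. T \<in> P \<Longrightarrow> T \<noteq> (a,b) \<Longrightarrow> {fst T<..<snd T} \<inter> {a<..<b} = {}"
    using P ab unfolding is_partition_def by (metis fst_conv snd_conv)
  let ?m = "(a+b)/2"
  have u: "{a..b} = {a..?m} \<union> {?m..b}" using ab' by auto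
  have "(\<Union>T\<in>(P - {(a, b)}) \<union> {(a, ?m), (?m, b)}. {fst T..snd T}) = (\<Union>T\<in>P. {fst T..snd T})"
  proof -
    have "(\<Union>T\<in>(P - {(a, b)}) \<union> {(a, ?m), (?m, b)}. {fst T..snd T})
       = (\<Union>T\<in>P - {(a,b)}. {fst T..snd T}) \<union> ({a..?m} \<union> {?m..b})" by (simp add: Un_ac)
    also have "\<dots> = (\<Union>T\<in>P - {(a,b)}. {fst T..snd T}) \<union> {a..b}" by (simp only: u)
    also have "\<dots> = (\<Union>T\<in>insert (a,b) (P - {(a,b)}). {fst T..snd T})"
      by (simp only: UN_insert fst_conv snd_conv Un_commute)
    also have "insert (a,b) (P - {(a,b)}) = P" using ab by blast
    finally show ?thesis .
  qed
  note U = this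
  have D: "\<forall>T\<in>(P - {(a, b)}) \<union> {(a, ?m), (?m, b)}. \<forall>T'\<in>(P - {(a, b)}) \<union> {(a, ?m), (?m, b)}.
      T \<noteq> T' \<longrightarrow> {fst T<..<snd T} \<inter> {fst T'<..<snd T'} = {}"
  proof (intro ballI impI)
    fix T T' assume T: "T \<in> (P - {(a, b)}) \<union> {(a, ?m), (?m, b)}" and T': "T' \<in> (P - {(a, b)}) \<union> {(a, ?m), (?m, b)}" and ne: "T \<noteq> T'"
    have sub1: "{a<..<?m} \<subseteq> {a<..<b}" "{?m<..<b} \<subseteq> {a<..<b}" by auto
    show "{fst T<..<snd T} \<inter> {fst T'<..<snd T'} = {}"
    proof (cases "T \<in> P - {(a,b)}")
      case True
      note TT = this
      show ?thesis
      proof (cases "T' \<in> P - {(a,b)}")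
        case True then show ?thesis using TT ne P unfolding is_partition_def by blast
      next
        case False
        then have "T' = (a,?m) \<or> T' = (?m,b)" using T' by blast
        then have "{fst T'<..<snd T'} \<subseteq> {a<..<b}" using sub1 by auto
        then show ?thesis using dis[of T] TT by blast
      qed
    next
      case False
      then have TT: "T = (a,?m) \<or> T = (?m,b)" using T by blast
      show ?thesis
      proof (cases "T' \<in> P - {(a,b)}")
        case True
        have "{fst T<..<snd T} \<subseteq> {a<..<b}" using TT sub1 by auto
        then show ?thesis using dis[of T'] True by blast
      next
        case False
        then have "T' = (a,?m) \<or> T' = (?m,b)" using T' by blast
        then show ?thesis using TT ne ab' by auto
      qed
    qed
  qed
  have F: "finite ((P - {(a, b)}) \<union> {(a, ?m), (?m, b)})" using P unfolding is_partition_def by auto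
  have N: "\<forall>T\<in>(P - {(a, b)}) \<union> {(a, ?m), (?m, b)}. fst T < snd T"
  proof
    fix T assume "T \<in> (P - {(a, b)}) \<union> {(a, ?m), (?m, b)}"
    then consider "T \<in> P" | "T = (a,?m)" | "T = (?m,b)" by blast
    then show "fst T < snd T"
    proof cases
      case 1 then show ?thesis using P unfolding is_partition_def by blast
    qed (use ab' in auto)
  qed
  have U2: "(\<Union>T\<in>P. {fst T..snd T}) = {lo..hi}" using P unfolding is_partition_def by blast
  show ?thesis unfolding is_partition_def using F N D U U2 by presburger
qed

lemma bisections_partition:
  assumes "P \<in> bisections T0" "is_partition T0 lo hi"
  shows "is_partition P lo hi"
  using assms(1)
proof (induction rule: bisections.induct)
  case base then show ?case using assms(2) .
next
  case (bisect P a b)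
  show ?case by (rule partition_bisect[OF bisect.IH bisect.hyps(2)])
qed

lemma bisections_dyadic:
  assumes "P \<in> bisections T0" "T \<in> P" and nd: "\<forall>S\<in>T0. fst S < snd S"
  shows "\<exists>S\<in>T0. \<exists>k::nat. fst S \<le> fst T \<and> snd T \<le> snd S \<and> snd T - fst T = (snd S - fst S) / 2^k"
  using assms(1,2)
proof (induction arbitrary: T rule: bisections.induct)
  case base
  then show ?case by (intro bexI[of _ T] exI[of _ 0]) auto
next
  case (bisect P a b)
  show ?case
  proof (cases "T \<in> P")
    case True then show ?thesis using bisect.IH by blast
  next
    case False
    then have T: "T = (a,(a+b)/2) \<or> T = ((a+b)/2,b)" using bisect.prems by blast
    obtain S k where S: "S \<in> T0" "fst S \<le> a" "b \<le> snd S" "b - a = (snd S - fst S)/2^k"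
      using bisect.IH[OF bisect.hyps(2)] by auto
    have "snd S - fst S > 0" using nd S(1) by auto
    then have "(snd S - fst S)/2^k \<ge> 0" by simp
    then have "a \<le> b" using S(4) by linarith
    then have "fst S \<le> fst T \<and> snd T \<le> snd S \<and> snd T - fst T = (snd S - fst S) / 2^(Suc k)"
      using T S(2,3,4) \<open>a \<le> b\<close> by (auto simp: field_simps)
    then show ?thesis using S(1) by blast
  qed
qed

lemma partition_same:
  assumes "is_partition P lo hi" "T1 \<in> P" "T2 \<in> P" "x \<in> {fst T1<..<snd T1}" "x \<in> {fst T2<..<snd T2}"
  shows "T1 = T2"
  using assms unfolding is_partition_def by blast

lemma partition_nondeg: "is_partition P lo hi \<Longrightarrow> T \<in> P \<Longrightarrow> fst T < snd T"
  unfolding is_partition_def by blast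

lemma halving:
  assumes T0: "is_partition T0 lo hi" and P: "P \<in> bisections T0" and Q: "Q \<in> bisections T0"
    and T: "T \<in> Q" and T': "T' \<in> P" and c: "fst T' \<le> fst T" "snd T \<le> snd T'" and ne: "T \<noteq> T'"
  shows "snd T - fst T \<le> (snd T' - fst T') / 2"
proof -
  have QP: "is_partition Q lo hi" using bisections_partition[OF Q T0] .
  have lt: "fst T < snd T" using partition_nondeg[OF QP T] .
  have nd: "\<forall>S\<in>T0. fst S < snd S" using partition_nondeg[OF T0] by blast
  obtain S k where S: "S \<in> T0" "fst S \<le> fst T" "snd T \<le> snd S" "snd T - fst T = (snd S - fst S)/2^k"
    using bisections_dyadic[OF Q T nd] by blast
  obtain S' k' where S': "S' \<in> T0" "fst S' \<le> fst T'" "snd T' \<le> snd S'" "snd T' - fst T' = (snd S' - fst S')/2^k'"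
    using bisections_dyadic[OF P T' nd] by blast
  let ?x = "(fst T + snd T)/2"
  have "S = S'"
    apply (rule partition_same[OF T0 S(1) S'(1), of ?x]) using S S' c lt by auto
  then have S'': "snd T' - fst T' = (snd S - fst S)/2^k'" using S' by simp
  have L: "snd S - fst S > 0" using partition_nondeg[OF T0 S(1)] by simp
  have "snd T - fst T < snd T' - fst T'"
  proof (rule ccontr)
    assume "\<not> ?thesis"
    then have "fst T = fst T'" "snd T = snd T'" using c by auto
    then show False using ne by (simp add: prod_eq_iff)
  qed
  then have "(snd S - fst S)/2^k < (snd S - fst S)/2^k'" using S(4) S'' by simp
  then have "k' < k"
  proof (rule contrapos_pp)
    assume "\<not> k' < k"
    then have "(2::real)^k \<le> 2^k'" by (intro power_increasing) auto
    then have "(snd S - fst S)/2^k' \<le> (snd S - fst S)/2^k" using L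
      by (intro divide_left_mono) auto
    then show "\<not> (snd S - fst S)/2^k < (snd S - fst S)/2^k'" by linarith
  qed
  then have "(2::real)^(Suc k') \<le> 2^k" by (intro power_increasing) auto
  then have "(snd S - fst S)/2^k \<le> (snd S - fst S)/2^(Suc k')" using L
    by (intro divide_left_mono) auto
  then show ?thesis using S(4) S'' by simp
qed



lemma aff_of_interp:
  fixes u :: "real \<Rightarrow> 'v::real_vector"
  assumes ab: "a < b" and h: "\<forall>t\<in>{a..b}. u t = u a + ((t - a) / (b - a)) *\<^sub>R (u b - u a)"
  shows "\<forall>t\<in>{a..b}. u t = (u a - (a / (b - a)) *\<^sub>R (u b - u a)) + t *\<^sub>R ((1 / (b - a)) *\<^sub>R (u b - u a))"
proof
  fix t assume t: "t \<in> {a..b}"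
  define v where "v = u b - u a"
  have k: "((t - a) / (b - a)) = t / (b - a) - a / (b - a)" by (simp add: diff_divide_distrib)
  have "u t = u a + ((t - a) / (b - a)) *\<^sub>R v" using h t unfolding v_def by blast
  also have "\<dots> = u a + (t / (b - a) - a / (b - a)) *\<^sub>R v" by (simp only: k)
  also have "\<dots> = (u a - (a / (b - a)) *\<^sub>R v) + (t / (b - a)) *\<^sub>R v"
    by (simp only: scaleR_diff_left) (simp add: algebra_simps)
  also have "(t / (b - a)) *\<^sub>R v = t *\<^sub>R ((1 / (b - a)) *\<^sub>R v)" by simp
  finally show "u t = (u a - (a / (b - a)) *\<^sub>R (u b - u a)) + t *\<^sub>R ((1 / (b - a)) *\<^sub>R (u b - u a))"
    unfolding v_def .
qed

lemma interp_of_aff: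
  fixes u :: "real \<Rightarrow> 'v::real_vector"
  assumes ab: "a < b" and h: "\<forall>t\<in>{a..b}. u t = p + t *\<^sub>R w"
  shows "(1 / (b - a)) *\<^sub>R (u b - u a) = w"
proof -
  have "u b - u a = (b - a) *\<^sub>R w" using h ab by (simp add: scaleR_diff_left)
  then show ?thesis using ab by simp
qed

lemma aff_integral:
  fixes e :: "real \<Rightarrow> 'v::euclidean_space"
  assumes ab: "a < b" and h: "\<forall>t\<in>{a..b}. e t = p + t *\<^sub>R s"
  shows "((\<lambda>t. (norm (e t))\<^sup>2) has_integral
           ((b - a) * (norm (p + ((a + b) / 2) *\<^sub>R s))\<^sup>2 + (b - a)^3 / 12 * (norm s)\<^sup>2)) {a..b}"
proof -
  define m where "m = (a + b) / 2"
  define c where "c = p + m *\<^sub>R s"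
  define F where "F t = (norm c)\<^sup>2 * t + (t - m)\<^sup>2 * (inner c s) + (t - m)^3 / 3 * (norm s)\<^sup>2" for t
  have eq: "(norm (p + t *\<^sub>R s))\<^sup>2 = (norm c)\<^sup>2 + 2 * (t - m) * inner c s + (t - m)\<^sup>2 * (norm s)\<^sup>2" for t
  proof -
    have "p + t *\<^sub>R s = c + (t - m) *\<^sub>R s" by (simp add: c_def scaleR_diff_left)
    then have "(norm (p + t *\<^sub>R s))\<^sup>2 = inner (c + (t - m) *\<^sub>R s) (c + (t - m) *\<^sub>R s)"
      by (simp only: power2_norm_eq_inner)
    also have "\<dots> = inner c c + 2 * (t - m) * inner c s + (t - m)\<^sup>2 * inner s s"
      by (simp add: inner_add_left inner_add_right inner_commute algebra_simps power2_eq_square)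
    finally show ?thesis by (simp add: power2_norm_eq_inner)
  qed
  have der: "(F has_vector_derivative (norm (p + t *\<^sub>R s))\<^sup>2) (at t within {a..b})" for t
  proof -
    have "(F has_real_derivative ((norm c)\<^sup>2 + 2 * (t - m) * inner c s + (t - m)\<^sup>2 * (norm s)\<^sup>2)) (at t within {a..b})"
      unfolding F_def
      apply (auto intro!: derivative_eq_intros simp: power2_eq_square algebra_simps)
      apply (simp add: field_simps)
      done
    then show ?thesis using eq by (simp add: has_real_derivative_iff_has_vector_derivative)
  qed
  have I: "((\<lambda>t. (norm (p + t *\<^sub>R s))\<^sup>2) has_integral (F b - F a)) {a..b}"
    by (rule fundamental_theorem_of_calculus) (use ab der in auto)
  have "F b - F a = (b - a) * (norm c)\<^sup>2 + (b - a)^3 / 12 * (norm s)\<^sup>2"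
  proof -
    define h where "h = (b - a) / 2"
    have bm: "b = m + h" and am: "a = m - h" by (auto simp: h_def m_def field_simps)
    have "F b - F a = F (m + h) - F (m - h)" using bm am by simp
    also have "\<dots> = 2 * h * (norm c)\<^sup>2 + 2 * h^3 / 3 * (norm s)\<^sup>2"
      unfolding F_def by (simp add: power2_eq_square power3_eq_cube field_simps)
    also have "\<dots> = (b - a) * (norm c)\<^sup>2 + (b - a)^3 / 12 * (norm s)\<^sup>2"
      by (simp add: h_def power3_eq_cube field_simps)
    finally show ?thesis .
  qed
  then have I2: "((\<lambda>t. (norm (p + t *\<^sub>R s))\<^sup>2) has_integral
           ((b - a) * (norm (p + ((a + b) / 2) *\<^sub>R s))\<^sup>2 + (b - a)^3 / 12 * (norm s)\<^sup>2)) {a..b}"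
    using I by (simp add: c_def m_def)
  show ?thesis
    by (rule has_integral_cong[THEN iffD2, OF _ I2]) (use h in auto)
qed

lemma aff_integral_bound:
  fixes e :: "real \<Rightarrow> 'v::euclidean_space"
  assumes ab: "a < b" and h: "\<forall>t\<in>{a..b}. e t = p + t *\<^sub>R s"
  shows "(b - a)^3 * (norm s)\<^sup>2 \<le> 12 * integral {a..b} (\<lambda>t. (norm (e t))\<^sup>2)"
    and "(\<lambda>t. (norm (e t))\<^sup>2) integrable_on {a..b}"
proof -
  note I = aff_integral[OF ab h]
  have "0 \<le> (b - a) * (norm (p + ((a + b) / 2) *\<^sub>R s))\<^sup>2" using ab by simp
  then show "(b - a)^3 * (norm s)\<^sup>2 \<le> 12 * integral {a..b} (\<lambda>t. (norm (e t))\<^sup>2)"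
    using integral_unique[OF I] by simp
  show "(\<lambda>t. (norm (e t))\<^sup>2) integrable_on {a..b}" using I by blast
qed

lemma est_formula:
  fixes A :: "'v::euclidean_space \<Rightarrow>\<^sub>L ('v \<Rightarrow>\<^sub>L real)"
  assumes ab: "a < b" and hu: "\<forall>t\<in>{a..b}. u t = p + t *\<^sub>R w"
    and hf: "\<forall>t\<in>{a<..<b}. f t = c + t *\<^sub>R d"
  shows "est A f u (a, b) = (b - a) * sqrt ((b - a) * (norm (d - blinfun_apply A w))\<^sup>2)"
proof -
  let ?g = "\<lambda>s. f s - blinfun_apply A (u s)"
  have vd: "vector_derivative ?g (at t) = d - blinfun_apply A w" if t: "t \<in> {a<..<b}" for t
  proof -
    have d0: "((\<lambda>s. (c + s *\<^sub>R d) - blinfun_apply A (p + s *\<^sub>R w)) has_vector_derivative (d - blinfun_apply A w)) (at t)"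
      by (auto intro!: derivative_eq_intros simp: blinfun.add_right blinfun.scaleR_right)
    have "(?g has_vector_derivative (d - blinfun_apply A w)) (at t)"
      by (rule has_vector_derivative_transform_within_open[OF d0, of "{a<..<b}"]) (use t hf hu in auto)
    then show ?thesis by (rule vector_derivative_at)
  qed
  have "integral {a..b} (\<lambda>t. (norm (vector_derivative ?g (at t)))\<^sup>2)
      = integral {a..b} (\<lambda>t. (norm (d - blinfun_apply A w))\<^sup>2)"
    by (rule integral_spike[of "{a,b}"]) (use vd in auto)
  also have "\<dots> = (b - a) * (norm (d - blinfun_apply A w))\<^sup>2" using ab by simp
  finally show ?thesis unfolding est_def by simp
qed



lemma union_integral:
  fixes g :: "real \<Rightarrow> real"
  assumes Q: "is_partition Q lo hi" and S: "S \<subseteq> Q"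
    and int: "\<forall>T\<in>S. g integrable_on {fst T..snd T}"
  shows "(g has_integral (\<Sum>T\<in>S. integral {fst T..snd T} g)) (\<Union>T\<in>S. {fst T..snd T})"
proof -
  let ?i = "\<lambda>T. {fst T..snd T}"
  have fin: "finite S" using Q S unfolding is_partition_def using finite_subset by blast
  have nd: "\<And>T. T \<in> S \<Longrightarrow> fst T < snd T" using partition_nondeg[OF Q] S by blast
  have inj: "inj_on ?i S"
  proof (rule inj_onI)
    fix T1 T2 assume T1: "T1 \<in> S" and T2: "T2 \<in> S" and e: "?i T1 = ?i T2"
    then show "T1 = T2" using nd[OF T1] nd[OF T2] by (simp add: prod_eq_iff)
  qed
  have neg: "pairwise (\<lambda>X Y. negligible (X \<inter> Y)) (?i ` S)"
  proof (rule pairwiseI)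
    fix X Y assume X: "X \<in> ?i ` S" and Y: "Y \<in> ?i ` S" and ne: "X \<noteq> Y"
    obtain T1 where T1: "T1 \<in> S" "X = ?i T1" using X by blast
    obtain T2 where T2: "T2 \<in> S" "Y = ?i T2" using Y by blast
    have T12: "T1 \<noteq> T2" using ne T1 T2 by blast
    define lo' where "lo' = max (fst T1) (fst T2)"
    define hi' where "hi' = min (snd T1) (snd T2)"
    have XY: "X \<inter> Y = {lo'..hi'}" using T1 T2 by (simp add: lo'_def hi'_def)
    have "\<not> lo' < hi'"
    proof
      assume lt: "lo' < hi'"
      let ?x = "(lo' + hi') / 2"
      have "?x \<in> {fst T1<..<snd T1}" "?x \<in> {fst T2<..<snd T2}"
        using lt unfolding lo'_def hi'_def by auto
      then show False using partition_same[OF Q, of T1 T2 ?x] S T1 T2 T12 by blast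
    qed
    then have "X \<inter> Y \<subseteq> {lo'}" using XY by auto
    then show "negligible (X \<inter> Y)" by (rule negligible_subset[rotated]) auto
  qed
  have "(g has_integral (\<Sum>X\<in>?i ` S. integral X g)) (\<Union>(?i ` S))"
    by (rule has_integral_Union) (use fin neg int in auto)
  moreover have "(\<Sum>X\<in>?i ` S. integral X g) = (\<Sum>T\<in>S. integral (?i T) g)"
    using sum.reindex[OF inj] by simp
  ultimately show ?thesis by simp
qed

lemma length_sum:
  assumes Q: "is_partition Q lo hi" and S: "S \<subseteq> Q"
    and sub: "\<forall>T\<in>S. a \<le> fst T \<and> snd T \<le> b" and ab: "a \<le> b"
  shows "(\<Sum>T\<in>S. snd T - fst T) \<le> b - a"
proof -
  have nd: "\<And>T. T \<in> S \<Longrightarrow> fst T < snd T" using partition_nondeg[OF Q] S by blast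
  have I: "((\<lambda>x. 1::real) has_integral (\<Sum>T\<in>S. integral {fst T..snd T} (\<lambda>x. 1::real))) (\<Union>T\<in>S. {fst T..snd T})"
    by (rule union_integral[OF Q S]) (auto intro!: integrable_const_ivl)
  have eq: "(\<Sum>T\<in>S. integral {fst T..snd T} (\<lambda>x. 1::real)) = (\<Sum>T\<in>S. snd T - fst T)"
  proof (rule sum.cong)
    fix T assume "T \<in> S"
    then have "fst T \<le> snd T" using nd less_imp_le by blast
    then show "integral {fst T..snd T} (\<lambda>x. 1::real) = snd T - fst T" by simp
  qed simp
  have J: "((\<lambda>x. 1::real) has_integral (b - a)) {a..b}" using has_integral_const_real[of "1::real" a b] ab by simp
  have "(\<Union>T\<in>S. {fst T..snd T}) \<subseteq> {a..b}" using sub by auto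
  from has_integral_subset_le[OF this I J] show ?thesis using eq by simp
qed



lemma sq_est: "0 \<le> L \<Longrightarrow> (L * sqrt (L * g\<^sup>2))\<^sup>2 = L^3 * g\<^sup>2"
  by (simp add: power_mult_distrib power3_eq_cube power2_eq_square)

lemma est_eq: "0 \<le> L \<Longrightarrow> 0 \<le> g \<Longrightarrow> L * sqrt (L * g\<^sup>2) = L * sqrt L * g"
  by (simp add: real_sqrt_mult)

lemma RL1:
  fixes L L' gP gQ s K I :: real
  assumes "0 < L" "0 < L'" "L \<le> L'/2" "0 \<le> gP" "0 \<le> gQ" "0 \<le> s" "0 \<le> K"
    "gQ \<le> gP + K * s" "L^3 * s\<^sup>2 \<le> 12 * I"
  shows "(L * sqrt (L * gQ\<^sup>2))\<^sup>2 \<le> L / (2 * L') * (L' * sqrt (L' * gP\<^sup>2))\<^sup>2 + 24 * K\<^sup>2 * I"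
proof -
  have e1: "(L * sqrt (L * gQ\<^sup>2))\<^sup>2 = L^3 * gQ\<^sup>2" using assms by (intro sq_est) auto
  have e2: "L / (2 * L') * (L' * sqrt (L' * gP\<^sup>2))\<^sup>2 = L * L'\<^sup>2 * gP\<^sup>2 / 2"
    using assms by (simp add: sq_est power3_eq_cube power2_eq_square field_simps)
  have "gQ\<^sup>2 \<le> (gP + K * s)\<^sup>2" using assms by (intro power_mono) auto
  also have "\<dots> \<le> 2 * gP\<^sup>2 + 2 * K\<^sup>2 * s\<^sup>2"
  proof -
    have "0 \<le> (gP - K * s)\<^sup>2" by simp
    then show ?thesis by (simp add: power2_eq_square algebra_simps)
  qed
  finally have g2: "gQ\<^sup>2 \<le> 2 * gP\<^sup>2 + 2 * K\<^sup>2 * s\<^sup>2" .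
  have L3: "0 \<le> L^3" using assms by simp
  have "L^3 * gQ\<^sup>2 \<le> L^3 * (2 * gP\<^sup>2 + 2 * K\<^sup>2 * s\<^sup>2)" using mult_left_mono[OF g2 L3] .
  also have "\<dots> = 2 * (L * L\<^sup>2 * gP\<^sup>2) + 2 * K\<^sup>2 * (L^3 * s\<^sup>2)" by (simp add: power3_eq_cube power2_eq_square algebra_simps)
  also have "\<dots> \<le> 2 * (L * (L'\<^sup>2 / 4) * gP\<^sup>2) + 2 * K\<^sup>2 * (12 * I)"
  proof (rule add_mono)
    have "L\<^sup>2 \<le> (L'/2)\<^sup>2" using assms by (intro power_mono) auto
    then have "L\<^sup>2 \<le> L'\<^sup>2 / 4" by (simp add: power_divide)
    then have "L * L\<^sup>2 * gP\<^sup>2 \<le> L * (L'\<^sup>2 / 4) * gP\<^sup>2" using assms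
      by (intro mult_right_mono mult_left_mono) auto
    then show "2 * (L * L\<^sup>2 * gP\<^sup>2) \<le> 2 * (L * (L'\<^sup>2 / 4) * gP\<^sup>2)" by simp
    show "2 * K\<^sup>2 * (L^3 * s\<^sup>2) \<le> 2 * K\<^sup>2 * (12 * I)" using assms by (intro mult_left_mono) auto
  qed
  also have "\<dots> = L * L'\<^sup>2 * gP\<^sup>2 / 2 + 24 * K\<^sup>2 * I" by (simp add: field_simps)
  finally show ?thesis using e1 e2 by simp
qed

lemma RL2:
  fixes L gP gQ s K I :: real
  assumes "0 < L" "0 \<le> gP" "0 \<le> gQ" "0 \<le> s" "0 \<le> K"
    "\<bar>gQ - gP\<bar> \<le> K * s" "L^3 * s\<^sup>2 \<le> 12 * I"
  shows "(L * sqrt (L * gQ\<^sup>2) - L * sqrt (L * gP\<^sup>2))\<^sup>2 \<le> 12 * K\<^sup>2 * I"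
proof -
  have "L * sqrt (L * gQ\<^sup>2) - L * sqrt (L * gP\<^sup>2) = L * sqrt L * (gQ - gP)"
    using assms by (simp add: est_eq algebra_simps)
  then have "(L * sqrt (L * gQ\<^sup>2) - L * sqrt (L * gP\<^sup>2))\<^sup>2 = L^3 * (gQ - gP)\<^sup>2"
    using assms by (simp add: power_mult_distrib power3_eq_cube power2_eq_square)
  also have "\<dots> \<le> L^3 * (K * s)\<^sup>2"
  proof -
    have "(gQ - gP)\<^sup>2 \<le> (K * s)\<^sup>2" using assms
      by (metis abs_le_square_iff abs_of_nonneg mult_nonneg_nonneg)
    then show ?thesis using assms by (intro mult_left_mono) auto
  qed
  also have "\<dots> = K\<^sup>2 * (L^3 * s\<^sup>2)" by (simp add: power_mult_distrib)
  also have "\<dots> \<le> K\<^sup>2 * (12 * I)" using assms by (intro mult_left_mono) auto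
  finally show ?thesis by simp
qed



lemma main_bound:
  fixes A :: "'v::euclidean_space \<Rightarrow>\<^sub>L ('v \<Rightarrow>\<^sub>L real)" and f :: "real \<Rightarrow> ('v \<Rightarrow>\<^sub>L real)"
    and uP uQ :: "real \<Rightarrow> 'v"
  assumes T0: "is_partition T0 0 tend" and fT0: "piecewise_affine_on f T0"
    and P: "P \<in> bisections T0" and Q: "Q \<in> bisections T0" and ref: "refines Q P"
    and cP: "cn_solution m A f u0 P uP" and cQ: "cn_solution m A f u0 Q uQ"
  shows "(\<Sum>T\<in>Q - P. (est A f uQ T)\<^sup>2)
          \<le> 1/2 * (\<Sum>T\<in>P - Q. (est A f uP T)\<^sup>2) + (24 * (norm A)\<^sup>2 + 4 * norm A + 1) * (L2V_norm tend (\<lambda>t. uQ t - uP t))\<^sup>2"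
    and "\<bar>sqrt (\<Sum>T\<in>Q \<inter> P. (est A f uQ T)\<^sup>2) - sqrt (\<Sum>T\<in>P \<inter> Q. (est A f uP T)\<^sup>2)\<bar>
          \<le> (24 * (norm A)\<^sup>2 + 4 * norm A + 1) * L2V_norm tend (\<lambda>t. uQ t - uP t)"
proof -
  define K where "K = norm A"
  have K0: "0 \<le> K" unfolding K_def by simp
  have PP: "is_partition P 0 tend" by (rule bisections_partition[OF P T0])
  have QP: "is_partition Q 0 tend" by (rule bisections_partition[OF Q T0])
  have finP: "finite P" using PP unfolding is_partition_def by blast
  have finQ: "finite Q" using QP unfolding is_partition_def by blast
  have ndP: "\<And>T. T \<in> P \<Longrightarrow> fst T < snd T" using partition_nondeg[OF PP] .
  have ndQ: "\<And>T. T \<in> Q \<Longrightarrow> fst T < snd T" using partition_nondeg[OF QP] .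
  have nd0: "\<forall>S\<in>T0. fst S < snd S" using partition_nondeg[OF T0] by blast
  define wP where "wP T = (1 / (snd T - fst T)) *\<^sub>R (uP (snd T) - uP (fst T))" for T
  define pP where "pP T = uP (fst T) - (fst T / (snd T - fst T)) *\<^sub>R (uP (snd T) - uP (fst T))" for T
  define wQ where "wQ T = (1 / (snd T - fst T)) *\<^sub>R (uQ (snd T) - uQ (fst T))" for T
  define pQ where "pQ T = uQ (fst T) - (fst T / (snd T - fst T)) *\<^sub>R (uQ (snd T) - uQ (fst T))" for T
  have affP: "\<forall>t\<in>{fst T..snd T}. uP t = pP T + t *\<^sub>R wP T" if T: "T \<in> P" for T
  proof -
    have "\<forall>t\<in>{fst T..snd T}. uP t = uP (fst T) + ((t - fst T) / (snd T - fst T)) *\<^sub>R (uP (snd T) - uP (fst T))"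
      using cP T unfolding cn_solution_def by blast
    from aff_of_interp[OF ndP[OF T] this] show ?thesis unfolding pP_def wP_def .
  qed
  have affQ: "\<forall>t\<in>{fst T..snd T}. uQ t = pQ T + t *\<^sub>R wQ T" if T: "T \<in> Q" for T
  proof -
    have "\<forall>t\<in>{fst T..snd T}. uQ t = uQ (fst T) + ((t - fst T) / (snd T - fst T)) *\<^sub>R (uQ (snd T) - uQ (fst T))"
      using cQ T unfolding cn_solution_def by blast
    from aff_of_interp[OF ndQ[OF T] this] show ?thesis unfolding pQ_def wQ_def .
  qed
  have fP: "\<forall>T\<in>P. \<exists>cd. \<forall>t\<in>{fst T<..<snd T}. f t = fst cd + t *\<^sub>R snd cd"
  proof
    fix T assume T: "T \<in> P"
    obtain S k where S: "S \<in> T0" "fst S \<le> fst T" "snd T \<le> snd S"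
      using bisections_dyadic[OF P T nd0] by blast
    obtain c d where cd: "\<forall>t\<in>{fst S<..<snd S}. f t = c + t *\<^sub>R d"
      using fT0 S(1) unfolding piecewise_affine_on_def by blast
    have "\<forall>t\<in>{fst T<..<snd T}. f t = fst (c, d) + t *\<^sub>R snd (c, d)"
      using cd S by auto
    then show "\<exists>cd. \<forall>t\<in>{fst T<..<snd T}. f t = fst cd + t *\<^sub>R snd cd" by blast
  qed
  from bchoice[OF fP] obtain cd where cd: "\<forall>T\<in>P. \<forall>t\<in>{fst T<..<snd T}. f t = fst (cd T) + t *\<^sub>R snd (cd T)"
    by blast
  have parex: "\<forall>T\<in>Q. \<exists>T'. T' \<in> P \<and> fst T' \<le> fst T \<and> snd T \<le> snd T'"
    using ref unfolding refines_def by blast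
  from bchoice[OF parex] obtain par where par: "\<forall>T\<in>Q. par T \<in> P \<and> fst (par T) \<le> fst T \<and> snd T \<le> snd (par T)"
    by blast
  have par_uniq: "T' = par T" if T: "T \<in> Q" and T': "T' \<in> P" "fst T' \<le> fst T" "snd T \<le> snd T'" for T T'
  proof -
    let ?x = "(fst T + snd T) / 2"
    have lt: "fst T < snd T" using ndQ[OF T] .
    show ?thesis
      by (rule partition_same[OF PP T'(1), of "par T" ?x]) (use par T T' lt in auto)
  qed
  have par_self: "par T = T" if "T \<in> Q" "T \<in> P" for T
    using par_uniq[of T T] that by simp
  have par_notQ: "par T \<notin> Q" if T: "T \<in> Q" "T \<notin> P" for T
  proof
    assume pQ: "par T \<in> Q"
    let ?x = "(fst T + snd T) / 2"
    have lt: "fst T < snd T" using ndQ[OF T(1)] .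
    have "T = par T"
      by (rule partition_same[OF QP T(1) pQ, of ?x]) (use par T lt in auto)
    then show False using par T by metis
  qed
  define I where "I T = integral {fst T..snd T} (\<lambda>t. (norm (uQ t - uP t))\<^sup>2)" for T :: "real \<times> real"
  define dd where "dd T = snd (cd T)" for T
  define gQ where "gQ T = norm (dd (par T) - blinfun_apply A (wQ T))" for T
  define gP where "gP T = norm (dd T - blinfun_apply A (wP T))" for T
  define s where "s T = norm (wQ T - wP (par T))" for T
  define L where "L T = snd T - fst T" for T :: "real \<times> real"
  have loc: "est A f uQ T = L T * sqrt (L T * (gQ T)\<^sup>2) \<and> (L T)^3 * (s T)\<^sup>2 \<le> 12 * I T
      \<and> (\<lambda>t. (norm (uQ t - uP t))\<^sup>2) integrable_on {fst T..snd T}" if T: "T \<in> Q" for T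
  proof -
    let ?T' = "par T"
    have T': "?T' \<in> P" "fst ?T' \<le> fst T" "snd T \<le> snd ?T'" using par T by auto
    have ab: "fst T < snd T" using ndQ[OF T] .
    have hu: "\<forall>t\<in>{fst T..snd T}. uQ t = pQ T + t *\<^sub>R wQ T" using affQ[OF T] .
    have hf: "\<forall>t\<in>{fst T<..<snd T}. f t = fst (cd ?T') + t *\<^sub>R dd ?T'"
      using cd T' unfolding dd_def by fastforce
    have e1: "est A f uQ (fst T, snd T) = (snd T - fst T) * sqrt ((snd T - fst T) * (norm (dd ?T' - blinfun_apply A (wQ T)))\<^sup>2)"
      by (rule est_formula[OF ab hu hf])
    have he: "\<forall>t\<in>{fst T..snd T}. uQ t - uP t = (pQ T - pP ?T') + t *\<^sub>R (wQ T - wP ?T')"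
    proof
      fix t assume t: "t \<in> {fst T..snd T}"
      have "uP t = pP ?T' + t *\<^sub>R wP ?T'" using affP[OF T'(1)] t T' by auto
      moreover have "uQ t = pQ T + t *\<^sub>R wQ T" using hu t by blast
      ultimately show "uQ t - uP t = (pQ T - pP ?T') + t *\<^sub>R (wQ T - wP ?T')"
        by (simp add: algebra_simps scaleR_diff_right)
    qed
    note B = aff_integral_bound[OF ab he]
    show ?thesis using e1 B unfolding gQ_def L_def s_def I_def by simp
  qed
  have locP: "est A f uP T = L T * sqrt (L T * (gP T)\<^sup>2)" if T: "T \<in> P" for T
  proof -
    have ab: "fst T < snd T" using ndP[OF T] .
    have hf: "\<forall>t\<in>{fst T<..<snd T}. f t = fst (cd T) + t *\<^sub>R dd T"
      using cd T unfolding dd_def by fastforce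
    have "est A f uP (fst T, snd T) = (snd T - fst T) * sqrt ((snd T - fst T) * (norm (dd T - blinfun_apply A (wP T)))\<^sup>2)"
      by (rule est_formula[OF ab affP[OF T] hf])
    then show ?thesis unfolding gP_def L_def by simp
  qed
  have gtri: "gQ T \<le> gP (par T) + K * s T \<and> \<bar>gQ T - gP (par T)\<bar> \<le> K * s T" for T
  proof -
    have eq: "dd (par T) - blinfun_apply A (wQ T) = (dd (par T) - blinfun_apply A (wP (par T))) - blinfun_apply A (wQ T - wP (par T))"
      by (simp add: blinfun.diff_right)
    have nb: "norm (blinfun_apply A (wQ T - wP (par T))) \<le> K * s T"
      unfolding K_def s_def by (rule norm_blinfun)
    have "gQ T \<le> gP (par T) + norm (blinfun_apply A (wQ T - wP (par T)))"
      unfolding gQ_def gP_def eq by (rule norm_triangle_ineq4)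
    moreover have "\<bar>gQ T - gP (par T)\<bar> \<le> norm (blinfun_apply A (wQ T - wP (par T)))"
    proof -
      have "\<bar>gQ T - gP (par T)\<bar> \<le> norm ((dd (par T) - blinfun_apply A (wQ T)) - (dd (par T) - blinfun_apply A (wP (par T))))"
        unfolding gQ_def gP_def by (rule norm_triangle_ineq3)
      also have "(dd (par T) - blinfun_apply A (wQ T)) - (dd (par T) - blinfun_apply A (wP (par T))) = - blinfun_apply A (wQ T - wP (par T))"
        by (simp add: blinfun.diff_right)
      finally show ?thesis by simp
    qed
    ultimately show ?thesis using nb by linarith
  qed
  have Inn: "0 \<le> I T" if "T \<in> Q" for T
    unfolding I_def by (rule integral_nonneg) (use loc[OF that] in auto)
  have UQ: "(\<Union>T\<in>Q. {fst T..snd T}) = {0..tend}" using QP unfolding is_partition_def by blast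
  have intQ: "((\<lambda>t. (norm (uQ t - uP t))\<^sup>2) has_integral (\<Sum>T\<in>Q. I T)) {0..tend}"
    using union_integral[OF QP subset_refl, of "\<lambda>t. (norm (uQ t - uP t))\<^sup>2"] loc UQ unfolding I_def by auto
  define N where "N = L2V_norm tend (\<lambda>t. uQ t - uP t)"
  have sumI0: "0 \<le> (\<Sum>T\<in>Q. I T)" by (rule sum_nonneg) (use Inn in auto)
  have N2: "N\<^sup>2 = (\<Sum>T\<in>Q. I T)"
    unfolding N_def L2V_norm_def using integral_unique[OF intQ] sumI0 by simp
  have N0: "0 \<le> N" unfolding N_def L2V_norm_def using integral_unique[OF intQ] sumI0 by simp
  have sub_le: "(\<Sum>T\<in>S. I T) \<le> N\<^sup>2" if "S \<subseteq> Q" for S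
    unfolding N2 by (rule sum_mono2[OF finQ that]) (use Inn in auto)
  define h where "h T' = (est A f uP T')\<^sup>2 / (2 * L T')" for T' :: "real \<times> real"
  have step1: "(est A f uQ T)\<^sup>2 \<le> L T * h (par T) + 24 * K\<^sup>2 * I T" if T: "T \<in> Q - P" for T
  proof -
    have TQ: "T \<in> Q" and TnP: "T \<notin> P" using T by auto
    have T': "par T \<in> P" "fst (par T) \<le> fst T" "snd T \<le> snd (par T)" using par TQ by auto
    have ne: "T \<noteq> par T" using T' TnP by metis
    have half: "L T \<le> L (par T) / 2"
      unfolding L_def by (rule halving[OF T0 P Q TQ T'(1) T'(2,3) ne])
    have l1: "0 < L T" using ndQ[OF TQ] unfolding L_def by simp
    have l2: "0 < L (par T)" using ndP[OF T'(1)] unfolding L_def by simp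
    have "(L T * sqrt (L T * (gQ T)\<^sup>2))\<^sup>2 \<le> L T / (2 * L (par T)) * (L (par T) * sqrt (L (par T) * (gP (par T))\<^sup>2))\<^sup>2 + 24 * K\<^sup>2 * I T"
      by (rule RL1[where s="s T"]) (use l1 l2 half K0 gtri[of T] loc[OF TQ] in \<open>auto simp: gQ_def gP_def s_def\<close>)
    then show ?thesis using loc[OF TQ] locP[OF T'(1)] unfolding h_def by (simp add: field_simps)
  qed
  have parimg: "par ` (Q - P) \<subseteq> P - Q" using par par_notQ by auto
  have S1: "(\<Sum>T\<in>Q - P. (est A f uQ T)\<^sup>2) \<le> (\<Sum>T\<in>Q - P. L T * h (par T)) + 24 * K\<^sup>2 * (\<Sum>T\<in>Q - P. I T)"
  proof -
    have "(\<Sum>T\<in>Q - P. (est A f uQ T)\<^sup>2) \<le> (\<Sum>T\<in>Q - P. L T * h (par T) + 24 * K\<^sup>2 * I T)"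
      by (rule sum_mono) (rule step1)
    also have "\<dots> = (\<Sum>T\<in>Q - P. L T * h (par T)) + 24 * K\<^sup>2 * (\<Sum>T\<in>Q - P. I T)"
      by (simp add: sum.distrib sum_distrib_left)
    finally show ?thesis .
  qed
  have S2: "(\<Sum>T\<in>Q - P. L T * h (par T)) \<le> 1/2 * (\<Sum>T\<in>P - Q. (est A f uP T)\<^sup>2)"
  proof -
    have "(\<Sum>T\<in>Q - P. L T * h (par T)) = (\<Sum>T'\<in>P - Q. \<Sum>T\<in>{T \<in> Q - P. par T = T'}. L T * h (par T))"
      using sum.group[OF _ _ parimg, of "\<lambda>T. L T * h (par T)"] finP finQ by simp
    also have "\<dots> = (\<Sum>T'\<in>P - Q. h T' * (\<Sum>T\<in>{T \<in> Q - P. par T = T'}. L T))"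
      by (rule sum.cong) (auto simp: sum_distrib_left mult.commute)
    also have "\<dots> \<le> (\<Sum>T'\<in>P - Q. h T' * L T')"
    proof (rule sum_mono)
      fix T' assume T': "T' \<in> P - Q"
      have "(\<Sum>T\<in>{T \<in> Q - P. par T = T'}. L T) \<le> snd T' - fst T'"
        unfolding L_def
        by (rule length_sum[OF QP]) (use par ndP[of T'] T' in auto)
      moreover have "0 \<le> h T'" unfolding h_def L_def using ndP[of T'] T' by auto
      ultimately show "h T' * (\<Sum>T\<in>{T \<in> Q - P. par T = T'}. L T) \<le> h T' * L T'"
        unfolding L_def by (intro mult_left_mono) auto
    qed
    also have "\<dots> = (\<Sum>T'\<in>P - Q. 1/2 * (est A f uP T')\<^sup>2)"
    proof (rule sum.cong)
      fix T' assume "T' \<in> P - Q"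
      then have "0 < L T'" using ndP unfolding L_def by auto
      then show "h T' * L T' = 1/2 * (est A f uP T')\<^sup>2" unfolding h_def by (simp add: field_simps)
    qed simp
    also have "\<dots> = 1/2 * (\<Sum>T\<in>P - Q. (est A f uP T)\<^sup>2)" by (simp add: sum_distrib_left)
    finally show ?thesis .
  qed
  have S3: "24 * K\<^sup>2 * (\<Sum>T\<in>Q - P. I T) \<le> (24 * K\<^sup>2 + 4 * K + 1) * N\<^sup>2"
  proof -
    have "24 * K\<^sup>2 * (\<Sum>T\<in>Q - P. I T) \<le> 24 * K\<^sup>2 * N\<^sup>2"
      by (rule mult_left_mono) (use sub_le[of "Q - P"] in auto)
    also have "\<dots> \<le> (24 * K\<^sup>2 + 4 * K + 1) * N\<^sup>2"
      by (rule mult_right_mono) (use K0 in auto)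
    finally show ?thesis .
  qed
  show "(\<Sum>T\<in>Q - P. (est A f uQ T)\<^sup>2)
          \<le> 1/2 * (\<Sum>T\<in>P - Q. (est A f uP T)\<^sup>2) + (24 * (norm A)\<^sup>2 + 4 * norm A + 1) * (L2V_norm tend (\<lambda>t. uQ t - uP t))\<^sup>2"
    using S1 S2 S3 unfolding K_def N_def by linarith
  let ?S = "Q \<inter> P"
  define a where "a T = est A f uQ T" for T
  define b where "b T = est A f uP T" for T
  have ab_le: "(a T - b T)\<^sup>2 \<le> 12 * K\<^sup>2 * I T" if T: "T \<in> ?S" for T
  proof -
    have TQ: "T \<in> Q" and TP: "T \<in> P" using T by auto
    have pT: "par T = T" using par_self[OF TQ TP] .
    have l1: "0 < L T" using ndQ[OF TQ] unfolding L_def by simp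
    have "(L T * sqrt (L T * (gQ T)\<^sup>2) - L T * sqrt (L T * (gP T)\<^sup>2))\<^sup>2 \<le> 12 * K\<^sup>2 * I T"
      by (rule RL2[where s="s T"]) (use l1 K0 gtri[of T] loc[OF TQ] pT in \<open>auto simp: gQ_def gP_def s_def\<close>)
    then show ?thesis using loc[OF TQ] locP[OF TP] unfolding a_def b_def by simp
  qed
  have D: "L2_set (\<lambda>T. a T - b T) ?S \<le> 4 * K * N"
  proof -
    have "L2_set (\<lambda>T. a T - b T) ?S = sqrt (\<Sum>T\<in>?S. (a T - b T)\<^sup>2)" unfolding L2_set_def ..
    also have "\<dots> \<le> sqrt (\<Sum>T\<in>?S. 12 * K\<^sup>2 * I T)"
      by (rule real_sqrt_le_mono, rule sum_mono) (rule ab_le)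
    also have "\<dots> = sqrt (12 * K\<^sup>2 * (\<Sum>T\<in>?S. I T))" by (simp add: sum_distrib_left)
    also have "\<dots> \<le> sqrt (16 * K\<^sup>2 * N\<^sup>2)"
    proof (rule real_sqrt_le_mono)
      have sl: "(\<Sum>T\<in>?S. I T) \<le> N\<^sup>2" by (rule sub_le) auto
      have "12 * K\<^sup>2 * (\<Sum>T\<in>?S. I T) \<le> 12 * K\<^sup>2 * N\<^sup>2"
        using sl by (intro mult_left_mono) auto
      moreover have "0 \<le> K\<^sup>2 * N\<^sup>2" by simp
      ultimately show "12 * K\<^sup>2 * (\<Sum>T\<in>?S. I T) \<le> 16 * K\<^sup>2 * N\<^sup>2"
        by linarith
    qed
    also have "\<dots> = 4 * K * N"
    proof -
      have "16 * K\<^sup>2 * N\<^sup>2 = (4 * K * N)\<^sup>2" by (simp add: power_mult_distrib)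
      then show ?thesis using K0 N0 by simp
    qed
    finally show ?thesis .
  qed
  have tri1: "L2_set a ?S \<le> L2_set (\<lambda>T. a T - b T) ?S + L2_set b ?S"
    using L2_set_triangle_ineq[of "\<lambda>T. a T - b T" b ?S] by simp
  have tri2: "L2_set b ?S \<le> L2_set (\<lambda>T. a T - b T) ?S + L2_set a ?S"
  proof -
    have "L2_set b ?S \<le> L2_set (\<lambda>T. b T - a T) ?S + L2_set a ?S"
      using L2_set_triangle_ineq[of "\<lambda>T. b T - a T" a ?S] by simp
    moreover have "L2_set (\<lambda>T. b T - a T) ?S = L2_set (\<lambda>T. a T - b T) ?S"
      unfolding L2_set_def by (simp add: power2_commute)
    ultimately show ?thesis by simp
  qed
  have eqa: "sqrt (\<Sum>T\<in>Q \<inter> P. (est A f uQ T)\<^sup>2) = L2_set a ?S" unfolding L2_set_def a_def ..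
  have eqb: "sqrt (\<Sum>T\<in>P \<inter> Q. (est A f uP T)\<^sup>2) = L2_set b ?S" unfolding L2_set_def b_def by (simp add: Int_commute)
  have "4 * K * N \<le> (24 * K\<^sup>2 + 4 * K + 1) * N" using K0 N0
    by (intro mult_right_mono) auto
  then show "\<bar>sqrt (\<Sum>T\<in>Q \<inter> P. (est A f uQ T)\<^sup>2) - sqrt (\<Sum>T\<in>P \<inter> Q. (est A f uP T)\<^sup>2)\<bar>
          \<le> (24 * (norm A)\<^sup>2 + 4 * norm A + 1) * L2V_norm tend (\<lambda>t. uQ t - uP t)"
    using eqa eqb tri1 tri2 D unfolding K_def N_def by linarith
qed

theorem mainTheorem17:
  fixes A :: "'v::euclidean_space \<Rightarrow>\<^sub>L ('v \<Rightarrow>\<^sub>L real)"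
  assumes coercive: "\<exists>\<alpha>>0. \<forall>v. blinfun_apply (blinfun_apply A v) v \<ge> \<alpha> * (norm v)\<^sup>2"
  shows "\<exists>q C. 1/4 < q \<and> q < 1 \<and> C > 0 \<and>
    (\<forall>(m :: 'v \<Rightarrow> 'v \<Rightarrow> real) (tend :: real) (u0 :: 'v) T0 (f :: real \<Rightarrow> ('v \<Rightarrow>\<^sub>L real))
        P Q (uP :: real \<Rightarrow> 'v) (uQ :: real \<Rightarrow> 'v).
       H_inner m \<longrightarrow> 0 < tend \<longrightarrow> is_partition T0 0 tend \<longrightarrow> piecewise_affine_on f T0 \<longrightarrow>
       P \<in> bisections T0 \<longrightarrow> Q \<in> bisections T0 \<longrightarrow> refines Q P \<longrightarrow>
       cn_solution m A f u0 P uP \<longrightarrow> cn_solution m A f u0 Q uQ \<longrightarrow>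
       (\<Sum>T\<in>Q - P. (est A f uQ T)\<^sup>2)
          \<le> q * (\<Sum>T\<in>P - Q. (est A f uP T)\<^sup>2) + C * (L2V_norm tend (\<lambda>t. uQ t - uP t))\<^sup>2
       \<and> \<bar>sqrt (\<Sum>T\<in>Q \<inter> P. (est A f uQ T)\<^sup>2) - sqrt (\<Sum>T\<in>P \<inter> Q. (est A f uP T)\<^sup>2)\<bar>
          \<le> C * L2V_norm tend (\<lambda>t. uQ t - uP t))"
proof -
  have C0: "0 < 24 * (norm A)\<^sup>2 + 4 * norm A + 1"
  proof -
    have "0 \<le> 24 * (norm A)\<^sup>2" by simp
    moreover have "0 \<le> 4 * norm A" by simp
    ultimately show ?thesis by linarith
  qed
  show ?thesis
    apply (rule exI[of _ "1/2"], rule exI[of _ "24 * (norm A)\<^sup>2 + 4 * norm A + 1"])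
    apply (intro conjI)
       apply simp
      apply simp
     apply (rule C0)
    apply (intro allI impI conjI)
     apply (rule main_bound(1); assumption)
    apply (rule main_bound(2); assumption)
    done
qed

end
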